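(* Let $Q$ be a quiver, $\Bbbk$ an algebraically closed field, and $I\subset \Bbbk Q$ a non-zero two-sided ideal of the path algebra. Let $a\in I$ be written as $a=\sum_{\omega}c_\omega\,\omega$ (finite sum over paths $\omega$ of $Q$, $c_\omega\in\Bbbk$). Then every path $\omega$ with $c_\omega\neq 0$ which is the only path of $Q$ having its head and its tail (i.e. $\omega\in\mathcal{A}$) belongs to $I$.
   Context: Paths of $Q$ include the trivial paths $\varepsilon_x$ at each vertex $x$. Each path $\omega$ has a head $\mathbf{h}(\omega)$ and tail $\mathbf{t}(\omega)$; the product $\omega_1\omega_2$ of paths in $\Bbbk Q$ is their concatenation (first $\omega_2$, then $\omega_1$) if $\mathbf{h}(\omega_2)=\mathbf{t}(\omega_1)$ and $0$ otherwise; the paths form a basis of $\Bbbk Q$. $\mathcal{A}$ denotes the set of paths $\omega$ such that no other path $\upsilon\ne\omega$ satisfies $\mathbf{h}(\upsilon)=\mathbf{h}(\omega)$ and $\mathbf{t}(\upsilon)=\mathbf{t}(\omega)$. *)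

theory Defs
  imports "HOL-Computational_Algebra.Polynomial"
begin

text \<open>A quiver is given by a vertex type 'v, an arrow type 'a and functions
  hd_arr (head) and tl_arr (tail) : 'a => 'v; an arrow goes from its tail to its head.
  A path is a pair (x, as): a start vertex x (its tail) and the list of arrows
  in traversal order. (x, []) is the trivial path at x.\<close>

type_synonym ('v, 'a) qpath = "'v \<times> 'a list"

definition is_path :: "('a \<Rightarrow> 'v) \<Rightarrow> ('a \<Rightarrow> 'v) \<Rightarrow> ('v, 'a) qpath \<Rightarrow> bool" where
  "is_path hq tq p = (case p of (x, as) \<Rightarrow>
     (as = [] \<or> (tq (hd as) = x \<and> (\<forall>i. Suc i < length as \<longrightarrow> hq (as ! i) = tq (as ! Suc i)))))"

definition ptail :: "('v, 'a) qpath \<Rightarrow> 'v" where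
  "ptail p = fst p"

definition phead :: "('a \<Rightarrow> 'v) \<Rightarrow> ('v, 'a) qpath \<Rightarrow> 'v" where
  "phead hq p = (if snd p = [] then fst p else hq (last (snd p)))"

text \<open>Product of paths p1 p2: first p2, then p1; defined iff head p2 = tail p1.\<close>
definition pconcat :: "('a \<Rightarrow> 'v) \<Rightarrow> ('v, 'a) qpath \<Rightarrow> ('v, 'a) qpath \<Rightarrow> ('v, 'a) qpath option" where
  "pconcat hq p1 p2 = (if phead hq p2 = ptail p1 then Some (ptail p2, snd p2 @ snd p1) else None)"

definition path_alg :: "('a \<Rightarrow> 'v) \<Rightarrow> ('a \<Rightarrow> 'v) \<Rightarrow> (('v, 'a) qpath \<Rightarrow> 'k::field) set" where
  "path_alg hq tq = {f. finite {p. f p \<noteq> 0} \<and> (\<forall>p. f p \<noteq> 0 \<longrightarrow> is_path hq tq p)}"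

definition pbasis :: "('v, 'a) qpath \<Rightarrow> (('v, 'a) qpath \<Rightarrow> 'k::field)" where
  "pbasis p = (\<lambda>q. if q = p then 1 else 0)"

definition pa_mult :: "('a \<Rightarrow> 'v) \<Rightarrow> (('v, 'a) qpath \<Rightarrow> 'k::field) \<Rightarrow> (('v, 'a) qpath \<Rightarrow> 'k)
    \<Rightarrow> (('v, 'a) qpath \<Rightarrow> 'k)" where
  "pa_mult hq f g = (\<lambda>w. \<Sum>(p1, p2) \<in> {(p1, p2). f p1 \<noteq> 0 \<and> g p2 \<noteq> 0 \<and> pconcat hq p1 p2 = Some w}.
      f p1 * g p2)"

definition two_sided_ideal :: "('a \<Rightarrow> 'v) \<Rightarrow> ('a \<Rightarrow> 'v) \<Rightarrow> (('v, 'a) qpath \<Rightarrow> 'k::field) set \<Rightarrow> bool" where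
  "two_sided_ideal hq tq I \<longleftrightarrow>
     I \<subseteq> path_alg hq tq \<and> (\<lambda>_. 0) \<in> I \<and>
     (\<forall>a\<in>I. \<forall>b\<in>I. (\<lambda>w. a w + b w) \<in> I) \<and>
     (\<forall>c. \<forall>a\<in>I. (\<lambda>w. c * a w) \<in> I) \<and>
     (\<forall>a\<in>I. \<forall>b\<in>path_alg hq tq. pa_mult hq a b \<in> I \<and> pa_mult hq b a \<in> I)"

definition in_A :: "('a \<Rightarrow> 'v) \<Rightarrow> ('a \<Rightarrow> 'v) \<Rightarrow> ('v, 'a) qpath \<Rightarrow> bool" where
  "in_A hq tq w \<longleftrightarrow> is_path hq tq w \<and>
     (\<forall>u. is_path hq tq u \<and> phead hq u = phead hq w \<and> ptail u = ptail w \<longrightarrow> u = w)"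

definition alg_closed_field :: "'k::field itself \<Rightarrow> bool" where
  "alg_closed_field _ \<longleftrightarrow> (\<forall>p :: 'k poly. degree p > 0 \<longrightarrow> (\<exists>x. poly p x = 0))"

end

theory Submission
  imports Defs
begin

lemma pconcat_left_triv: "pconcat hq (y,[]) p = Some u \<longleftrightarrow> phead hq p = y \<and> u = p"
  by (cases p) (auto simp: pconcat_def ptail_def)

lemma pconcat_right_triv: "pconcat hq p (x,[]) = Some u \<longleftrightarrow> fst p = x \<and> u = p"
  by (cases p) (auto simp: pconcat_def ptail_def phead_def)

lemma pbasis_nz: "(pbasis p q \<noteq> (0::'k::field)) \<longleftrightarrow> q = p"
  by (simp add: pbasis_def)

lemma mult_right_triv:
  fixes hq :: "'a \<Rightarrow> 'v" and f :: "('v,'a) qpath \<Rightarrow> 'k::field"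
  shows   "pa_mult hq f (pbasis (x,[])) = (\<lambda>u. if fst u = x then f u else (0::'k::field))"
proof
  fix u :: "('v,'a) qpath"
  have S: "{(p1, p2). f p1 \<noteq> 0 \<and> pbasis (x,[]) p2 \<noteq> (0::'k) \<and> pconcat hq p1 p2 = Some u}
      = (if f u \<noteq> 0 \<and> fst u = x then {(u,(x,[]))} else {})"
  proof -
    have K: "(f p1 \<noteq> 0 \<and> pbasis (x,[]) p2 \<noteq> (0::'k) \<and> pconcat hq p1 p2 = Some u)
       \<longleftrightarrow> (f u \<noteq> 0 \<and> fst u = x \<and> p1 = u \<and> p2 = (x,[]))" for p1 p2
      using pconcat_right_triv[of hq p1 x u] unfolding pbasis_nz by blast
    show ?thesis unfolding K by auto
  qed
  show "pa_mult hq f (pbasis (x,[])) u = (if fst u = x then f u else 0)"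
    unfolding pa_mult_def S by (auto simp: pbasis_def)
qed

lemma mult_left_triv:
  fixes hq :: "'a \<Rightarrow> 'v" and f :: "('v,'a) qpath \<Rightarrow> 'k::field"
  shows   "pa_mult hq (pbasis (y,[])) f = (\<lambda>u. if phead hq u = y then f u else (0::'k::field))"
proof
  fix u :: "('v,'a) qpath"
  have S: "{(p1, p2). pbasis (y,[]) p1 \<noteq> (0::'k) \<and> f p2 \<noteq> 0 \<and> pconcat hq p1 p2 = Some u}
      = (if f u \<noteq> 0 \<and> phead hq u = y then {((y,[]),u)} else {})"
  proof -
    have K: "(pbasis (y,[]) p1 \<noteq> (0::'k) \<and> f p2 \<noteq> 0 \<and> pconcat hq p1 p2 = Some u)
       \<longleftrightarrow> (f u \<noteq> 0 \<and> phead hq u = y \<and> p1 = (y,[]) \<and> p2 = u)" for p1 p2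
      using pconcat_left_triv[of hq y p2 u] unfolding pbasis_nz by blast
    show ?thesis unfolding K by auto
  qed
  show "pa_mult hq (pbasis (y,[])) f u = (if phead hq u = y then f u else 0)"
    unfolding pa_mult_def S by (auto simp: pbasis_def)
qed

lemma triv_in:
  fixes hq tq :: "'a \<Rightarrow> 'v"
  shows "pbasis (x,[]) \<in> (path_alg hq tq :: (('v,'a) qpath \<Rightarrow> 'k::field) set)"
proof -
  have E: "{p. pbasis (x,[]) p \<noteq> (0::'k)} = {(x,[])}" by (simp only: pbasis_nz) blast
  have F: "finite {p. pbasis (x,[]) p \<noteq> (0::'k)}" unfolding E by simp
  have G: "\<forall>p. pbasis (x,[]) p \<noteq> (0::'k) \<longrightarrow> is_path hq tq p"
    by (simp add: pbasis_nz is_path_def)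
  show ?thesis unfolding path_alg_def using F G by blast
qed

theorem lemma1:
  fixes hq tq :: "'a \<Rightarrow> 'v"
    and I :: "(('v, 'a) qpath \<Rightarrow> 'k::field) set"
    and a :: "('v, 'a) qpath \<Rightarrow> 'k"
    and w :: "('v, 'a) qpath"
  assumes "alg_closed_field TYPE('k)"
    and "two_sided_ideal hq tq I"
    and "I \<noteq> {\<lambda>_. 0}"
    and "a \<in> I"
    and "a w \<noteq> 0"
    and "in_A hq tq w"
  shows "pbasis w \<in> I"
proof -
  have sub: "I \<subseteq> path_alg hq tq"
    and sm: "\<And>c x. x \<in> I \<Longrightarrow> (\<lambda>w. c * x w) \<in> I"
    and ml: "\<And>x b. x \<in> I \<Longrightarrow> b \<in> path_alg hq tq \<Longrightarrow> pa_mult hq x b \<in> I"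
    and mr: "\<And>x b. x \<in> I \<Longrightarrow> b \<in> path_alg hq tq \<Longrightarrow> pa_mult hq b x \<in> I"
    using assms(2) unfolding two_sided_ideal_def by auto
  have aP: "a \<in> path_alg hq tq" using sub assms(4) by blast
  have c1: "pa_mult hq a (pbasis (ptail w,[])) \<in> I"
    by (rule ml[OF assms(4) triv_in])
  have c2: "pa_mult hq (pbasis (phead hq w,[])) (pa_mult hq a (pbasis (ptail w,[]))) \<in> I"
    by (rule mr[OF c1 triv_in])
  have eq: "pa_mult hq (pbasis (phead hq w,[])) (pa_mult hq a (pbasis (ptail w,[])))
      = (\<lambda>u. if u = w then a w else 0)"
  proof
    fix u
    show "pa_mult hq (pbasis (phead hq w,[])) (pa_mult hq a (pbasis (ptail w,[]))) u
        = (if u = w then a w else 0)"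
    proof (cases "a u = 0")
      case True then show ?thesis using assms(5) by (auto simp add: mult_left_triv mult_right_triv)
    next
      case False
      then have P: "is_path hq tq u" using aP unfolding path_alg_def by blast
      have A: "\<And>v. is_path hq tq v \<Longrightarrow> phead hq v = phead hq w \<Longrightarrow> ptail v = ptail w \<Longrightarrow> v = w"
        using assms(6) unfolding in_A_def by blast
      show ?thesis
      proof (cases "phead hq u = phead hq w \<and> fst u = ptail w")
        case True
        then have "u = w" using A[OF P] by (simp add: ptail_def)
        then show ?thesis by (simp add: mult_left_triv mult_right_triv ptail_def)
      next
        case F: False
        then have "u \<noteq> w" by (auto simp: ptail_def)
        then show ?thesis using F by (auto simp add: mult_left_triv mult_right_triv)
      qed
    qed
  qed
  have "(\<lambda>u. inverse (a w) * (if u = w then a w else 0)) \<in> I"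
    using sm[OF c2, of "inverse (a w)"] unfolding eq .
  moreover have "(\<lambda>u. inverse (a w) * (if u = w then a w else 0)) = pbasis w"
    using assms(5) by (simp add: pbasis_def fun_eq_iff)
  ultimately show ?thesis by simp
qed

end
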